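(* Let $N$ be an oriented Riemannian spin surface, $T$ a vector field, $f,H$ real functions, and $\varphi$ a spinor field of constant norm with $D\varphi=(H-f)\varphi-\frac12T\cdot\varphi$ such that $\varphi^+$ and $\varphi^-$ vanish nowhere. Then $W\equiv0$ on $N$, i.e. $\dfrac{A^+}{|\varphi^-|^2}=\dfrac{A^-}{|\varphi^+|^2}$.
   Context: Spinor conventions: $\Sigma N$ with Hermitian product $\langle\cdot,\cdot\rangle$, connection $\nabla$, Clifford multiplication with $X\cdot Y\cdot+Y\cdot X\cdot=-2\langle X,Y\rangle$, $\langle X\cdot\psi,\phi\rangle=-\langle\psi,X\cdot\phi\rangle$; $D=\sum_i e_i\cdot\nabla_{e_i}$; $\omega=e_1\cdot e_2$; $\Sigma^\pm N$ are the $\pm1$-eigenbundles of $i\omega$, $\varphi=\varphi^++\varphi^-$. $Q^\pm_\varphi(X,Y)=\mathrm{Re}\langle\nabla_X\varphi^\pm,Y\cdot\varphi^\mp\rangle$, $B^\pm(X,Y)=-\frac12\mathrm{Re}\langle X\cdot T\cdot\varphi^\pm,Y\cdot\varphi^\mp\rangle-\frac12\langle X,T\rangle\mathrm{Re}\langle\varphi^\pm,Y\cdot\varphi^\mp\rangle-\frac12 f\,\mathrm{Re}\langle X\cdot\varphi^\mp,Y\cdot\varphi^\mp\rangle$, $A^\pm=Q^\pm_\varphi+B^\pm$, $W=\frac{A^+}{|\varphi^-|^2}-\frac{A^-}{|\varphi^+|^2}$. *)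

theory Defs
  imports "HOL-Analysis.Analysis"
begin

(* Local model of an oriented Riemannian spin surface: an open set U of R^2
   equipped with a smooth oriented orthonormal frame (e1,e2) (which defines the
   metric); the spinor bundle is trivialised as U x C^2 with the standard
   complex 2-dimensional Clifford module.  Tangent vectors are written in frame
   coordinates (a,b) meaning a*e1 + b*e2. *)

type_synonym pt = "real \<times> real"
type_synonym spinor = "complex \<times> complex"

fun Ck_on :: "nat \<Rightarrow> ('a::euclidean_space \<Rightarrow> 'b::real_normed_vector) \<Rightarrow> 'a set \<Rightarrow> bool" where
  "Ck_on 0 g U = continuous_on U g"
| "Ck_on (Suc k) g U = (g differentiable_on U \<and>
       (\<forall>v. Ck_on k (\<lambda>p. frechet_derivative g (at p) v) U))"

definition smooth_on :: "('a::euclidean_space \<Rightarrow> 'b::real_normed_vector) \<Rightarrow> 'a set \<Rightarrow> bool" where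
  "smooth_on g U \<longleftrightarrow> (\<forall>k. Ck_on k g U)"

definition sprod :: "spinor \<Rightarrow> spinor \<Rightarrow> complex" where
  "sprod u v = fst u * cnj (fst v) + snd u * cnj (snd v)"

definition cscale :: "complex \<Rightarrow> spinor \<Rightarrow> spinor" where
  "cscale c u = (c * fst u, c * snd u)"

(* Clifford multiplication by e1 and e2 *)
definition cl1 :: "spinor \<Rightarrow> spinor" where
  "cl1 u = (\<i> * fst u, - \<i> * snd u)"
definition cl2 :: "spinor \<Rightarrow> spinor" where
  "cl2 u = (snd u, - fst u)"

definition clv :: "real \<times> real \<Rightarrow> spinor \<Rightarrow> spinor" where
  "clv X u = fst X *\<^sub>R cl1 u + snd X *\<^sub>R cl2 u"

(* volume element omega = e1 . e2, and the projections onto the +-1 eigenspaces of i*omega *)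
definition volel :: "spinor \<Rightarrow> spinor" where
  "volel u = cl1 (cl2 u)"
definition splus :: "spinor \<Rightarrow> spinor" where
  "splus u = (1/2) *\<^sub>R (u + cscale \<i> (volel u))"
definition sminus :: "spinor \<Rightarrow> spinor" where
  "sminus u = (1/2) *\<^sub>R (u - cscale \<i> (volel u))"

definition lie :: "(pt \<Rightarrow> pt) \<Rightarrow> (pt \<Rightarrow> pt) \<Rightarrow> pt \<Rightarrow> pt" where
  "lie X Y p = frechet_derivative Y (at p) (X p) - frechet_derivative X (at p) (Y p)"

definition det2 :: "pt \<Rightarrow> pt \<Rightarrow> real" where
  "det2 v w = fst v * snd w - snd v * fst w"

definition fcoord1 :: "(pt \<Rightarrow> pt) \<Rightarrow> (pt \<Rightarrow> pt) \<Rightarrow> pt \<Rightarrow> pt \<Rightarrow> real" where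
  "fcoord1 e1 e2 p v = det2 v (e2 p) / det2 (e1 p) (e2 p)"
definition fcoord2 :: "(pt \<Rightarrow> pt) \<Rightarrow> (pt \<Rightarrow> pt) \<Rightarrow> pt \<Rightarrow> pt \<Rightarrow> real" where
  "fcoord2 e1 e2 p v = det2 (e1 p) v / det2 (e1 p) (e2 p)"

(* Levi-Civita connection form omega_12(X) = g(nabla_X e1, e2) of the orthonormal frame,
   via the Koszul formula: if [e1,e2] = alpha e1 + beta e2, then
   omega_12(e1) = -alpha and omega_12(e2) = -beta. *)
definition conn12 :: "(pt \<Rightarrow> pt) \<Rightarrow> (pt \<Rightarrow> pt) \<Rightarrow> pt \<Rightarrow> real \<times> real \<Rightarrow> real" where
  "conn12 e1 e2 p X =
     - fst X * fcoord1 e1 e2 p (lie e1 e2 p) - snd X * fcoord2 e1 e2 p (lie e1 e2 p)"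

(* spinor covariant derivative:
   nabla_X psi = X(psi) + 1/2 g(nabla_X e1, e2) e1 . e2 . psi *)
definition snabla :: "(pt \<Rightarrow> pt) \<Rightarrow> (pt \<Rightarrow> pt) \<Rightarrow> (pt \<Rightarrow> spinor) \<Rightarrow> pt \<Rightarrow> real \<times> real \<Rightarrow> spinor" where
  "snabla e1 e2 \<psi> p X =
     frechet_derivative \<psi> (at p) (fst X *\<^sub>R e1 p + snd X *\<^sub>R e2 p)
     + (conn12 e1 e2 p X / 2) *\<^sub>R volel (\<psi> p)"

definition dirac :: "(pt \<Rightarrow> pt) \<Rightarrow> (pt \<Rightarrow> pt) \<Rightarrow> (pt \<Rightarrow> spinor) \<Rightarrow> pt \<Rightarrow> spinor" where
  "dirac e1 e2 \<psi> p = cl1 (snabla e1 e2 \<psi> p (1,0)) + cl2 (snabla e1 e2 \<psi> p (0,1))"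

definition gX :: "real \<times> real \<Rightarrow> real \<times> real \<Rightarrow> real" where
  "gX X Y = fst X * fst Y + snd X * snd Y"

definition Qp :: "(pt \<Rightarrow> pt) \<Rightarrow> (pt \<Rightarrow> pt) \<Rightarrow> (pt \<Rightarrow> spinor) \<Rightarrow> pt \<Rightarrow> real \<times> real \<Rightarrow> real \<times> real \<Rightarrow> real" where
  "Qp e1 e2 \<phi> p X Y = Re (sprod (snabla e1 e2 (\<lambda>q. splus (\<phi> q)) p X) (clv Y (sminus (\<phi> p))))"
definition Qm :: "(pt \<Rightarrow> pt) \<Rightarrow> (pt \<Rightarrow> pt) \<Rightarrow> (pt \<Rightarrow> spinor) \<Rightarrow> pt \<Rightarrow> real \<times> real \<Rightarrow> real \<times> real \<Rightarrow> real" where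
  "Qm e1 e2 \<phi> p X Y = Re (sprod (snabla e1 e2 (\<lambda>q. sminus (\<phi> q)) p X) (clv Y (splus (\<phi> p))))"

definition Bpm :: "spinor \<Rightarrow> spinor \<Rightarrow> real \<times> real \<Rightarrow> real \<Rightarrow> real \<times> real \<Rightarrow> real \<times> real \<Rightarrow> real" where
  "Bpm u w T f X Y =
     - (1/2) * Re (sprod (clv X (clv T u)) (clv Y w))
     - (1/2) * gX X T * Re (sprod u (clv Y w))
     - (1/2) * f * Re (sprod (clv X w) (clv Y w))"

definition Ap :: "(pt \<Rightarrow> pt) \<Rightarrow> (pt \<Rightarrow> pt) \<Rightarrow> (pt \<Rightarrow> spinor) \<Rightarrow> (pt \<Rightarrow> real \<times> real) \<Rightarrow> (pt \<Rightarrow> real)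
     \<Rightarrow> pt \<Rightarrow> real \<times> real \<Rightarrow> real \<times> real \<Rightarrow> real" where
  "Ap e1 e2 \<phi> T f p X Y =
     Qp e1 e2 \<phi> p X Y + Bpm (splus (\<phi> p)) (sminus (\<phi> p)) (T p) (f p) X Y"
definition Am :: "(pt \<Rightarrow> pt) \<Rightarrow> (pt \<Rightarrow> pt) \<Rightarrow> (pt \<Rightarrow> spinor) \<Rightarrow> (pt \<Rightarrow> real \<times> real) \<Rightarrow> (pt \<Rightarrow> real)
     \<Rightarrow> pt \<Rightarrow> real \<times> real \<Rightarrow> real \<times> real \<Rightarrow> real" where
  "Am e1 e2 \<phi> T f p X Y =
     Qm e1 e2 \<phi> p X Y + Bpm (sminus (\<phi> p)) (splus (\<phi> p)) (T p) (f p) X Y"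

definition snorm2 :: "spinor \<Rightarrow> real" where
  "snorm2 u = Re (sprod u u)"

definition Wform :: "(pt \<Rightarrow> pt) \<Rightarrow> (pt \<Rightarrow> pt) \<Rightarrow> (pt \<Rightarrow> spinor) \<Rightarrow> (pt \<Rightarrow> real \<times> real) \<Rightarrow> (pt \<Rightarrow> real)
     \<Rightarrow> pt \<Rightarrow> real \<times> real \<Rightarrow> real \<times> real \<Rightarrow> real" where
  "Wform e1 e2 \<phi> T f p X Y =
     Ap e1 e2 \<phi> T f p X Y / snorm2 (sminus (\<phi> p)) - Am e1 e2 \<phi> T f p X Y / snorm2 (splus (\<phi> p))"

end

theory Submission
  imports Defs
begin


lemma splus_eq: "splus u = ((fst u - snd u)/2, - ((fst u - snd u)/2))"
  by (simp add: splus_def cscale_def volel_def cl1_def cl2_def prod_eq_iff scaleR_conv_of_real field_simps)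
lemma sminus_eq: "sminus u = ((fst u + snd u)/2, (fst u + snd u)/2)"
  by (simp add: sminus_def cscale_def volel_def cl1_def cl2_def prod_eq_iff scaleR_conv_of_real field_simps)

lemma dirac_alg:
  fixes u1 u2 p11 p12 p21 p22 :: complex and k1 k2 T1 T2 f H :: real
  assumes dir: "cl1 ((p11,p12) + ((-k1)/2) *\<^sub>R volel (u1,u2)) + cl2 ((p21,p22) + ((-k2)/2) *\<^sub>R volel (u1,u2))
     = (H - f) *\<^sub>R (u1,u2) - (1/2) *\<^sub>R clv (T1,T2) (u1,u2)"
  assumes a_def: "a = (u1-u2)/2" and b_def: "b = (u1+u2)/2"
    and al1_def: "al1 = (p11-p12)/2 + \<i>*complex_of_real k1*a/2"
    and al2_def: "al2 = (p21-p22)/2 + \<i>*complex_of_real k2*a/2"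
    and be1_def: "be1 = (p11+p12)/2 - \<i>*complex_of_real k1*b/2"
    and be2_def: "be2 = (p21+p22)/2 - \<i>*complex_of_real k2*b/2"
    and t_def: "t = complex_of_real T2 + \<i> * complex_of_real T1"
  shows "\<i>*al1 - al2 = complex_of_real (H-f) * b + a * cnj t / 2"
    and "\<i>*be1 + be2 = complex_of_real (H-f) * a - b * t / 2"
proof -
  have c1: "fst (cl1 ((p11,p12) + ((-k1)/2) *\<^sub>R volel (u1,u2)) + cl2 ((p21,p22) + ((-k2)/2) *\<^sub>R volel (u1,u2)))
     = fst ((H - f) *\<^sub>R (u1,u2) - (1/2) *\<^sub>R clv (T1,T2) (u1,u2))" using dir by simp
  have c2: "snd (cl1 ((p11,p12) + ((-k1)/2) *\<^sub>R volel (u1,u2)) + cl2 ((p21,p22) + ((-k2)/2) *\<^sub>R volel (u1,u2)))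
     = snd ((H - f) *\<^sub>R (u1,u2) - (1/2) *\<^sub>R clv (T1,T2) (u1,u2))" using dir by simp
  have c1': "\<i>*(p11 + complex_of_real (-k1/2) * (\<i>*u2)) + (p22 + complex_of_real (-k2/2) * (\<i>*u1))
     = complex_of_real (H-f) * u1 - (1/2) * (complex_of_real T1 * (\<i>*u1) + complex_of_real T2 * u2)"
    using c1 by (simp add: cl1_def cl2_def volel_def clv_def scaleR_conv_of_real)
  have c2': "- \<i>*(p12 + complex_of_real (-k1/2) * (\<i>*u1)) - (p21 + complex_of_real (-k2/2) * (\<i>*u2))
     = complex_of_real (H-f) * u2 - (1/2) * (complex_of_real T1 * (-\<i>*u2) - complex_of_real T2 * u1)"
    using c2 by (simp add: cl1_def cl2_def volel_def clv_def scaleR_conv_of_real algebra_simps)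
  show "\<i>*al1 - al2 = complex_of_real (H-f) * b + a * cnj t / 2"
    using c1' c2' unfolding al1_def al2_def a_def b_def t_def
    by (simp add: complex_eq_iff field_simps) 
  show "\<i>*be1 + be2 = complex_of_real (H-f) * a - b * t / 2"
    using c1' c2' unfolding be1_def be2_def a_def b_def t_def
    by (simp add: complex_eq_iff field_simps) 
qed
lemma forms_alg:
  fixes u1 u2 p11 p12 p21 p22 a b al1 al2 be1 be2 alX beX y x t :: complex and SP SM :: spinor
    and k1 k2 T1 T2 f X1 X2 Y1 Y2 :: real
  assumes a_def: "a = (u1-u2)/2" and b_def: "b = (u1+u2)/2"
    and al1_def: "al1 = (p11-p12)/2 + \<i>*complex_of_real k1*a/2"
    and al2_def: "al2 = (p21-p22)/2 + \<i>*complex_of_real k2*a/2"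
    and be1_def: "be1 = (p11+p12)/2 - \<i>*complex_of_real k1*b/2"
    and be2_def: "be2 = (p21+p22)/2 - \<i>*complex_of_real k2*b/2"
    and t_def: "t = complex_of_real T2 + \<i> * complex_of_real T1"
    and x_def: "x = complex_of_real X2 + \<i> * complex_of_real X1"
    and y_def: "y = complex_of_real Y2 + \<i> * complex_of_real Y1"
    and alX_def: "alX = complex_of_real X1 * al1 + complex_of_real X2 * al2"
    and beX_def: "beX = complex_of_real X1 * be1 + complex_of_real X2 * be2"
    and hSP: "SP = X1 *\<^sub>R splus (p11,p12) + X2 *\<^sub>R splus (p21,p22) + ((- X1*k1 - X2*k2)/2) *\<^sub>R volel (splus (u1,u2))"
    and hSM: "SM = X1 *\<^sub>R sminus (p11,p12) + X2 *\<^sub>R sminus (p21,p22) + ((- X1*k1 - X2*k2)/2) *\<^sub>R volel (sminus (u1,u2))"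
  shows "SP = (alX, -alX)" "SM = (beX, beX)"
   "Re (sprod SP (clv (Y1,Y2) (sminus (u1,u2)))) + Bpm (splus (u1,u2)) (sminus (u1,u2)) (T1,T2) f (X1,X2) (Y1,Y2)
     = 2*Re(alX*cnj b*cnj y) + Re(a*cnj t*x*cnj b*cnj y) - (X1*T1+X2*T2)*Re(a*cnj b*cnj y) - f*(Re b^2 + Im b^2)*(X1*Y1+X2*Y2)"
   "Re (sprod SM (clv (Y1,Y2) (splus (u1,u2)))) + Bpm (sminus (u1,u2)) (splus (u1,u2)) (T1,T2) f (X1,X2) (Y1,Y2)
     = -2*Re(beX*cnj a*y) - Re(b*t*cnj x*cnj a*y) + (X1*T1+X2*T2)*Re(b*cnj a*y) - f*(Re a^2 + Im a^2)*(X1*Y1+X2*Y2)"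
   "snorm2 (splus (u1,u2)) = 2*(Re a^2 + Im a^2)" "snorm2 (sminus (u1,u2)) = 2*(Re b^2 + Im b^2)"
   "Re(al1*cnj a + be1*cnj b) = Re(sprod (p11,p12) (u1,u2))/2"
   "Re(al2*cnj a + be2*cnj b) = Re(sprod (p21,p22) (u1,u2))/2"
proof -
  show sp: "SP = (alX, -alX)"
    unfolding hSP alX_def al1_def al2_def a_def
    by (simp add: splus_eq volel_def cl1_def cl2_def scaleR_conv_of_real field_simps)
  show sm: "SM = (beX, beX)"
    unfolding hSM beX_def be1_def be2_def b_def
    by (simp add: sminus_eq volel_def cl1_def cl2_def scaleR_conv_of_real field_simps)
  have spu: "splus (u1,u2) = (a, -a)" by (simp add: splus_eq a_def)
  have smu: "sminus (u1,u2) = (b, b)" by (simp add: sminus_eq b_def)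
  show "Re (sprod SP (clv (Y1,Y2) (sminus (u1,u2)))) + Bpm (splus (u1,u2)) (sminus (u1,u2)) (T1,T2) f (X1,X2) (Y1,Y2)
     = 2*Re(alX*cnj b*cnj y) + Re(a*cnj t*x*cnj b*cnj y) - (X1*T1+X2*T2)*Re(a*cnj b*cnj y) - f*(Re b^2 + Im b^2)*(X1*Y1+X2*Y2)"
    unfolding sp spu smu t_def x_def y_def
    by (simp add: Bpm_def sprod_def clv_def cl1_def cl2_def gX_def scaleR_conv_of_real algebra_simps power2_eq_square)
  show "Re (sprod SM (clv (Y1,Y2) (splus (u1,u2)))) + Bpm (sminus (u1,u2)) (splus (u1,u2)) (T1,T2) f (X1,X2) (Y1,Y2)
     = -2*Re(beX*cnj a*y) - Re(b*t*cnj x*cnj a*y) + (X1*T1+X2*T2)*Re(b*cnj a*y) - f*(Re a^2 + Im a^2)*(X1*Y1+X2*Y2)"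
    unfolding sm spu smu t_def x_def y_def
    by (simp add: Bpm_def sprod_def clv_def cl1_def cl2_def gX_def scaleR_conv_of_real algebra_simps power2_eq_square)
  show "snorm2 (splus (u1,u2)) = 2*(Re a^2 + Im a^2)" "snorm2 (sminus (u1,u2)) = 2*(Re b^2 + Im b^2)"
    unfolding spu smu by (simp_all add: snorm2_def sprod_def power2_eq_square)
  show "Re(al1*cnj a + be1*cnj b) = Re(sprod (p11,p12) (u1,u2))/2"
    unfolding al1_def be1_def a_def b_def by (simp add: sprod_def field_simps)
  show "Re(al2*cnj a + be2*cnj b) = Re(sprod (p21,p22) (u1,u2))/2"
    unfolding al2_def be2_def a_def b_def by (simp add: sprod_def field_simps)
qed


lemma core:
  fixes A B p y :: complex and na nb k :: real
  assumes "A + cnj B = - (\<i> * complex_of_real ((na+nb)*k/2))"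
  shows "2*Re(A*p*cnj y) + 2*Re(B*cnj p*y) + na*Re(p*cnj y*(\<i>*complex_of_real k))
        + nb*Re(cnj p*y*(-\<i>*complex_of_real k)) = 0"
proof -
  have r: "Re A = - Re B" and i: "Im A = Im B - (na+nb)*k/2"
    using assms by (auto simp: complex_eq_iff)
  show ?thesis by (simp add: r i field_simps)
qed

lemma E12:
  fixes a b al1 al2 be1 be2 t :: complex and h T1 T2 :: real
  assumes t_def: "t = complex_of_real T2 + \<i> * complex_of_real T1"
    and D1: "\<i>*al1 - al2 = complex_of_real h * b + a * cnj t / 2"
    and D2: "\<i>*be1 + be2 = complex_of_real h * a - b * t / 2"
    and N1: "Re(al1*cnj a + be1*cnj b) = 0"
    and N2: "Re(al2*cnj a + be2*cnj b) = 0"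
  shows "al1*cnj a + cnj(be1*cnj b) = - (\<i> * complex_of_real ((Re a^2+Im a^2+Re b^2+Im b^2)*T2/2))"
    and "al2*cnj a + cnj(be2*cnj b) = \<i> * complex_of_real ((Re a^2+Im a^2+Re b^2+Im b^2)*T1/2)"
proof -
  have al2: "al2 = \<i>*al1 - complex_of_real h * b - a * cnj t / 2" using D1 by (simp add: algebra_simps)
  have be2: "be2 = complex_of_real h * a - b * t / 2 - \<i>*be1" using D2 by (simp add: algebra_simps)
  have N2': "Re((\<i>*al1 - complex_of_real h * b - a * cnj t / 2)*cnj a + (complex_of_real h * a - b * t / 2 - \<i>*be1)*cnj b) = 0"
    using N2 al2 be2 by simp
  have n1r: "Re al1 * Re a + Im al1 * Im a + (Re be1 * Re b + Im be1 * Im b) = 0" using N1 by simp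
  have n2r: "- Im al1 * Re a + Re al1 * Im a + Im be1 * Re b - Re be1 * Im b = (Re a^2+Im a^2+Re b^2+Im b^2)*T2/2"
      using N2' unfolding t_def by (simp add: field_simps power2_eq_square)
  show "al1*cnj a + cnj(be1*cnj b) = - (\<i> * complex_of_real ((Re a^2+Im a^2+Re b^2+Im b^2)*T2/2))"
    using n1r n2r by (simp add: complex_eq_iff field_simps power2_eq_square)
  show "al2*cnj a + cnj(be2*cnj b) = \<i> * complex_of_real ((Re a^2+Im a^2+Re b^2+Im b^2)*T1/2)"
    using n1r n2r unfolding al2 be2 t_def by (simp add: complex_eq_iff field_simps power2_eq_square)
qed

lemma final:
  fixes a b alX beX t x y :: complex and f T1 T2 X1 X2 Y1 Y2 :: real
  assumes t_def: "t = complex_of_real T2 + \<i> * complex_of_real T1"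
    and x_def: "x = complex_of_real X2 + \<i> * complex_of_real X1"
    and y_def: "y = complex_of_real Y2 + \<i> * complex_of_real Y1"
    and G: "alX*cnj a + cnj(beX*cnj b) = - (\<i> * complex_of_real ((Re a^2+Im a^2+Re b^2+Im b^2)*(T2*X1-T1*X2)/2))"
    and a0: "a \<noteq> 0" and b0: "b \<noteq> 0"
  shows "(2*Re(alX*cnj b*cnj y) + Re(a*cnj t*x*cnj b*cnj y) - (X1*T1+X2*T2)*Re(a*cnj b*cnj y) - f*(Re b^2 + Im b^2)*(X1*Y1+X2*Y2)) / (2*(Re b^2 + Im b^2))
    - (-2*Re(beX*cnj a*y) - Re(b*t*cnj x*cnj a*y) + (X1*T1+X2*T2)*Re(b*cnj a*y) - f*(Re a^2 + Im a^2)*(X1*Y1+X2*Y2)) / (2*(Re a^2 + Im a^2)) = 0"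
proof -
  define na where "na = Re a^2 + Im a^2"
  define nb where "nb = Re b^2 + Im b^2"
  define k where "k = T2*X1-T1*X2"
  have na0: "na > 0" using a0 unfolding na_def by (simp add: complex_eq_iff add_pos_nonneg sum_power2_gt_zero_iff)
  have nb0: "nb > 0" using b0 unfolding nb_def by (simp add: complex_eq_iff sum_power2_gt_zero_iff)
  have r: "Re (alX*cnj a) = - Re (beX*cnj b)" and i: "Im (alX*cnj a) = Im (beX*cnj b) - (na+nb)*k/2"
    using G unfolding na_def nb_def k_def by (auto simp: complex_eq_iff field_simps)
  have key: "na*(2*Re(alX*cnj b*cnj y) + Re(a*cnj t*x*cnj b*cnj y) - (X1*T1+X2*T2)*Re(a*cnj b*cnj y) - f*nb*(X1*Y1+X2*Y2))
     - nb*(-2*Re(beX*cnj a*y) - Re(b*t*cnj x*cnj a*y) + (X1*T1+X2*T2)*Re(b*cnj a*y) - f*na*(X1*Y1+X2*Y2)) = 0"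
  proof -
    have "na*(2*Re(alX*cnj b*cnj y) + Re(a*cnj t*x*cnj b*cnj y) - (X1*T1+X2*T2)*Re(a*cnj b*cnj y) - f*nb*(X1*Y1+X2*Y2))
     - nb*(-2*Re(beX*cnj a*y) - Re(b*t*cnj x*cnj a*y) + (X1*T1+X2*T2)*Re(b*cnj a*y) - f*na*(X1*Y1+X2*Y2))
      = 2*Re((alX*cnj a)*(a*cnj b)*cnj y) + 2*Re((beX*cnj b)*cnj(a*cnj b)*y)
        + na*Re((a*cnj b)*cnj y*(\<i>*complex_of_real k)) + nb*Re(cnj (a*cnj b)*y*(-\<i>*complex_of_real k))"
      unfolding na_def nb_def k_def t_def x_def by (simp add: algebra_simps power2_eq_square)
    also have "\<dots> = 0" by (rule core) (use G in \<open>simp add: na_def nb_def k_def\<close>)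
    finally show ?thesis .
  qed
  show ?thesis using key na0 nb0 unfolding na_def[symmetric] nb_def[symmetric]
    by (simp add: field_simps)
qed

lemma splus_add: "splus (x+y) = splus x + splus y"
  by (simp add: splus_eq prod_eq_iff field_simps)
lemma splus_scale: "splus (r *\<^sub>R x) = r *\<^sub>R splus x"
  by (simp add: splus_eq prod_eq_iff scaleR_conv_of_real field_simps)
lemma sminus_add: "sminus (x+y) = sminus x + sminus y"
  by (simp add: sminus_eq prod_eq_iff field_simps)
lemma sminus_scale: "sminus (r *\<^sub>R x) = r *\<^sub>R sminus x"
  by (simp add: sminus_eq prod_eq_iff scaleR_conv_of_real field_simps)

lemma bl_splus: "bounded_linear splus"
  unfolding linear_conv_bounded_linear[symmetric]
  by (rule linearI) (simp_all add: splus_add splus_scale)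
lemma bl_sminus: "bounded_linear sminus"
  unfolding linear_conv_bounded_linear[symmetric]
  by (rule linearI) (simp_all add: sminus_add sminus_scale)

lemma snorm2_inner: "snorm2 u = inner u u"
  by (simp add: snorm2_def sprod_def inner_prod_def inner_complex_def)
lemma Re_sprod_inner: "Re (sprod v u) = inner v u"
  by (simp add: sprod_def inner_prod_def inner_complex_def)
theorem mainTheorem13:
  fixes U :: "pt set" and e1 e2 :: "pt \<Rightarrow> pt"
    and \<phi> :: "pt \<Rightarrow> spinor" and T :: "pt \<Rightarrow> real \<times> real" and f H :: "pt \<Rightarrow> real"
  assumes "open U"
    and "smooth_on e1 U" and "smooth_on e2 U"
    and "\<forall>p\<in>U. det2 (e1 p) (e2 p) \<noteq> 0"
    and "smooth_on \<phi> U" and "smooth_on T U" and "smooth_on f U" and "smooth_on H U"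
    and "\<exists>c. \<forall>p\<in>U. snorm2 (\<phi> p) = c"
    and "\<forall>p\<in>U. dirac e1 e2 \<phi> p
            = (H p - f p) *\<^sub>R \<phi> p - (1/2) *\<^sub>R clv (T p) (\<phi> p)"
    and "\<forall>p\<in>U. splus (\<phi> p) \<noteq> 0" and "\<forall>p\<in>U. sminus (\<phi> p) \<noteq> 0"
  shows "\<forall>p\<in>U. \<forall>X Y. Wform e1 e2 \<phi> T f p X Y = 0"
  proof (intro ballI allI)
  fix p X Y assume pU: "p \<in> U"
  obtain c where hc: "\<forall>q\<in>U. snorm2 (\<phi> q) = c" using assms(9) by blast
  have "Ck_on (Suc 0) \<phi> U" using assms(5) unfolding smooth_on_def by blast
  hence "\<phi> differentiable_on U" by simp
  hence dp: "\<phi> differentiable (at p)" using differentiable_on_eq_differentiable_at[OF assms(1)] pU by blast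
  define L where "L = frechet_derivative \<phi> (at p)"
  have hasD: "(\<phi> has_derivative L) (at p)" unfolding L_def using dp frechet_derivative_works by blast
  have blL: "bounded_linear L" using has_derivative_bounded_linear[OF hasD] .
  have Ladd: "L (x + z) = L x + L z" for x z using blL by (simp add: linear_simps)
  have Lsc: "L (r *\<^sub>R x) = r *\<^sub>R L x" for r x using blL by (simp add: linear_simps)
  have normD: "Re (sprod (L v) (\<phi> p)) = 0" for v
  proof -
    have d1: "((\<lambda>q. inner (\<phi> q) (\<phi> q)) has_derivative (\<lambda>v. inner (\<phi> p) (L v) + inner (L v) (\<phi> p))) (at p)"
      by (rule has_derivative_inner[OF hasD hasD])
    have "((\<lambda>q. c) has_derivative (\<lambda>v. 0)) (at p)" by (rule has_derivative_const)
    hence d2: "((\<lambda>q. inner (\<phi> q) (\<phi> q)) has_derivative (\<lambda>v. 0)) (at p)"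
      by (rule has_derivative_transform_within_open[OF _ assms(1) pU]) (use hc in \<open>simp add: snorm2_inner\<close>)
    have "(\<lambda>v. inner (\<phi> p) (L v) + inner (L v) (\<phi> p)) = (\<lambda>v. 0)"
      using has_derivative_unique[OF d1 d2] .
    hence "inner (\<phi> p) (L v) + inner (L v) (\<phi> p) = 0" by meson
    thus ?thesis by (simp add: Re_sprod_inner inner_commute)
  qed
  have dsp: "frechet_derivative (\<lambda>q. splus (\<phi> q)) (at p) = (\<lambda>v. splus (L v))"
    using bounded_linear.has_derivative[OF bl_splus hasD] frechet_derivative_at by metis
  have dsm: "frechet_derivative (\<lambda>q. sminus (\<phi> q)) (at p) = (\<lambda>v. sminus (L v))"
    using bounded_linear.has_derivative[OF bl_sminus hasD] frechet_derivative_at by metis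
  obtain u1 u2 where u: "\<phi> p = (u1,u2)" by (cases "\<phi> p")
  obtain p11 p12 where P1: "L (e1 p) = (p11,p12)" by (cases "L (e1 p)")
  obtain p21 p22 where P2: "L (e2 p) = (p21,p22)" by (cases "L (e2 p)")
  obtain X1 X2 :: real where X: "X = (X1,X2)" by (cases X)
  obtain Y1 Y2 :: real where Y: "Y = (Y1,Y2)" by (cases Y)
  obtain T1 T2 :: real where Tp: "T p = (T1,T2)" by (cases "T p")
  define k1 where "k1 = fcoord1 e1 e2 p (lie e1 e2 p)"
  define k2 where "k2 = fcoord2 e1 e2 p (lie e1 e2 p)"
  have conn: "conn12 e1 e2 p Z = - fst Z * k1 - snd Z * k2" for Z
    by (simp add: conn12_def k1_def k2_def)
  have hSP: "snabla e1 e2 (\<lambda>q. splus (\<phi> q)) p (X1,X2) = X1 *\<^sub>R splus (p11,p12) + X2 *\<^sub>R splus (p21,p22) + ((- X1*k1 - X2*k2)/2) *\<^sub>R volel (splus (u1,u2))"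
    unfolding snabla_def dsp conn u by (simp add: Ladd Lsc splus_add splus_scale P1[symmetric] P2[symmetric])
  have hSM: "snabla e1 e2 (\<lambda>q. sminus (\<phi> q)) p (X1,X2) = X1 *\<^sub>R sminus (p11,p12) + X2 *\<^sub>R sminus (p21,p22) + ((- X1*k1 - X2*k2)/2) *\<^sub>R volel (sminus (u1,u2))"
    unfolding snabla_def dsm conn u by (simp add: Ladd Lsc sminus_add sminus_scale P1[symmetric] P2[symmetric])
  have dir: "cl1 ((p11,p12) + ((-k1)/2) *\<^sub>R volel (u1,u2)) + cl2 ((p21,p22) + ((-k2)/2) *\<^sub>R volel (u1,u2))
     = (H p - f p) *\<^sub>R (u1,u2) - (1/2) *\<^sub>R clv (T1,T2) (u1,u2)"
  proof -
    have d0: "dirac e1 e2 \<phi> p = (H p - f p) *\<^sub>R \<phi> p - (1/2) *\<^sub>R clv (T p) (\<phi> p)"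
      using assms(10) pU by blast
    show ?thesis using d0 unfolding dirac_def snabla_def conn L_def[symmetric] by (simp add: u Tp P1 P2)
  qed
  have n1: "Re (sprod (p11,p12) (u1,u2)) = 0" using normD[of "e1 p"] by (simp add: P1 u)
  have n2: "Re (sprod (p21,p22) (u1,u2)) = 0" using normD[of "e2 p"] by (simp add: P2 u)
  define a where "a = (u1-u2)/2"
  define b where "b = (u1+u2)/2"
  define al1 where "al1 = (p11-p12)/2 + \<i>*complex_of_real k1*a/2"
  define al2 where "al2 = (p21-p22)/2 + \<i>*complex_of_real k2*a/2"
  define be1 where "be1 = (p11+p12)/2 - \<i>*complex_of_real k1*b/2"
  define be2 where "be2 = (p21+p22)/2 - \<i>*complex_of_real k2*b/2"
  define t where "t = complex_of_real T2 + \<i> * complex_of_real T1"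
  define x where "x = complex_of_real X2 + \<i> * complex_of_real X1"
  define y where "y = complex_of_real Y2 + \<i> * complex_of_real Y1"
  define alX where "alX = complex_of_real X1 * al1 + complex_of_real X2 * al2"
  define beX where "beX = complex_of_real X1 * be1 + complex_of_real X2 * be2"
  note D = dirac_alg[OF dir a_def b_def al1_def al2_def be1_def be2_def t_def]
  note F = forms_alg[OF a_def b_def al1_def al2_def be1_def be2_def t_def x_def y_def alX_def beX_def hSP hSM]
  note E = E12[OF t_def D(1) D(2)] 
  have N1: "Re(al1*cnj a + be1*cnj b) = 0" using F(7) n1 by simp
  have N2: "Re(al2*cnj a + be2*cnj b) = 0" using F(8) n2 by simp
  have E1: "al1*cnj a + cnj(be1*cnj b) = - (\<i> * complex_of_real ((Re a^2+Im a^2+Re b^2+Im b^2)*T2/2))"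
    using E(1)[OF N1 N2] .
  have E2: "al2*cnj a + cnj(be2*cnj b) = \<i> * complex_of_real ((Re a^2+Im a^2+Re b^2+Im b^2)*T1/2)"
    using E(2)[OF N1 N2] .
  have G: "alX*cnj a + cnj(beX*cnj b) = - (\<i> * complex_of_real ((Re a^2+Im a^2+Re b^2+Im b^2)*(T2*X1-T1*X2)/2))"
  proof -
    have "alX*cnj a + cnj(beX*cnj b) = complex_of_real X1 * (al1*cnj a + cnj(be1*cnj b)) + complex_of_real X2 * (al2*cnj a + cnj(be2*cnj b))"
      unfolding alX_def beX_def by (simp add: algebra_simps)
    also have "\<dots> = - (\<i> * complex_of_real ((Re a^2+Im a^2+Re b^2+Im b^2)*(T2*X1-T1*X2)/2))"
      unfolding E1 E2 by (simp add: complex_eq_iff field_simps)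
    finally show ?thesis .
  qed
  have "splus (\<phi> p) \<noteq> 0" using assms(11) pU by blast
  hence a0: "a \<noteq> 0" by (simp add: u splus_eq a_def zero_prod_def)
  have "sminus (\<phi> p) \<noteq> 0" using assms(12) pU by blast
  hence b0: "b \<noteq> 0" by (simp add: u sminus_eq b_def zero_prod_def)
  show "Wform e1 e2 \<phi> T f p X Y = 0"
    unfolding Wform_def Ap_def Am_def Qp_def Qm_def u Tp Y X
    unfolding F(3) F(4) F(5) F(6) using final[OF t_def x_def y_def G a0 b0, of "f p"] by simp
qed

end
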